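(* Let $\Phi:\mathbb R^n\times\mathbb R^m\times\mathbb R^m\to\mathbb R$ and let $\{w^{(j)}\}_{j\ge0}$, $w^{(j)}=(X^{(j)},Y^{(j)},Z^{(j)})$, be a sequence satisfying Assumptions (A1), (A2), (A3). Then for every $\varepsilon>0$ there is a finite index $j_\varepsilon$ and multipliers $(u,v)\in\mathcal M_M(w^{(j_\varepsilon)})$ with $r_{\rm in}(w^{(j_\varepsilon)};u,v)\le\varepsilon$; in particular $r_{\rm in}(w^{(j_\varepsilon)})\le\varepsilon$. Moreover, for every $N\ge0$, \[ \min_{0\le j\le N}r_{\rm in}(w^{(j)})\le\sqrt{\frac{\Phi(w^{(0)})-\inf_{w:(Y,Z)\in\mathcal C}\Phi(w)}{c_X(N+1)}}. \]
   Context: Notation: $w=(X,Y,Z)\in\mathbb R^n\times\mathbb R^m\times\mathbb R^m$; $\mathcal C=\{(Y,Z): Y\ge0,\ Z\ge0,\ Y_iZ_i=0\ \forall i\}$. For $(Y,Z)\in\mathcal C$: $I_{+0}(w)=\{i:Y_i>0,Z_i=0\}$, $I_{0+}(w)=\{i:Y_i=0,Z_i>0\}$, $I_{00}(w)=\{i:Y_i=Z_i=0\}$; $\mathcal Q_M=\mathbb R_{++}^2\cup(\mathbb R\times\{0\})\cup(\{0\}\times\mathbb R)$; $\mathcal M_M(w)$ is the set of $(u,v)\in\mathbb R^m\times\mathbb R^m$ with $u_i=0$ for $i\in I_{+0}(w)$, $v_i=0$ for $i\in I_{0+}(w)$, $(u_i,v_i)\in\mathcal Q_M$ for $i\in I_{00}(w)$.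 $r_{\rm pri}(w)=\max\{\|\min(Y,0)\|_\infty,\|\min(Z,0)\|_\infty,\|Y\circ Z\|_\infty\}$; for $(u,v)\in\mathcal M_M(w)$, $r_{\rm in}(w;u,v)=\max\{\|\nabla_X\Phi(w)\|_\infty,\|\nabla_Y\Phi(w)-u\|_\infty,\|\nabla_Z\Phi(w)-v\|_\infty,r_{\rm pri}(w)\}$, and $r_{\rm in}(w)=\inf_{(u,v)\in\mathcal M_M(w)}r_{\rm in}(w;u,v)$. Assumption (A1): $\Phi$ is continuously differentiable on a neighborhood of the iterates with Lipschitz gradient there; $\{w^{(j)}\}$ is bounded; and $\inf\{\Phi(X,Y,Z):(Y,Z)\in\mathcal C\}>-\infty$. Assumption (A2): there is $c_X>0$ such that for all $j\ge0$, $\Phi(w^{(j+1)})\le\Phi(w^{(j)})-c_X\|\nabla_X\Phi(w^{(j)})\|_\infty^2$. Assumption (A3): for every $j$, $(Y^{(j)},Z^{(j)})\in\arg\min_{(Y,Z)\in\mathcal C}\Phi(X^{(j)},Y,Z)$. (These model the iterates of a two-block coordinate descent: a sufficient-decrease step in $X$ followed by exact minimization over $(Y,Z)\in\mathcal C$.) *)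

theory Defs
  imports "HOL-Analysis.Analysis"
begin

type_synonym ('n,'m) pt = "(real^'n) \<times> (real^'m) \<times> (real^'m)"

definition compC :: "((real^'m) \<times> (real^'m)) set" where
  "compC = {(Y,Z). \<forall>i. Y$i \<ge> 0 \<and> Z$i \<ge> 0 \<and> Y$i * Z$i = 0}"

definition QM :: "(real \<times> real) set" where
  "QM = {(a,b). a > 0 \<and> b > 0} \<union> {(a,b). b = 0} \<union> {(a,b). a = 0}"

definition Ipz :: "('n::finite,'m::finite) pt \<Rightarrow> 'm set" where
  "Ipz w = (case w of (X,Y,Z) \<Rightarrow> {i. Y$i > 0 \<and> Z$i = 0})"

definition Izp :: "('n::finite,'m::finite) pt \<Rightarrow> 'm set" where
  "Izp w = (case w of (X,Y,Z) \<Rightarrow> {i. Y$i = 0 \<and> Z$i > 0})"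

definition Izz :: "('n::finite,'m::finite) pt \<Rightarrow> 'm set" where
  "Izz w = (case w of (X,Y,Z) \<Rightarrow> {i. Y$i = 0 \<and> Z$i = 0})"

definition MM :: "('n::finite,'m::finite) pt \<Rightarrow> ((real^'m) \<times> (real^'m)) set" where
  "MM w = {(u,v). (\<forall>i\<in>Ipz w. u$i = 0) \<and> (\<forall>i\<in>Izp w. v$i = 0)
                 \<and> (\<forall>i\<in>Izz w. (u$i, v$i) \<in> QM)}"

definition gradPhi :: "(('n::finite,'m::finite) pt \<Rightarrow> real) \<Rightarrow> ('n,'m) pt \<Rightarrow> ('n,'m) pt" where
  "gradPhi Phi w = (THE D. GDERIV Phi w :> D)"

definition gradX :: "(('n::finite,'m::finite) pt \<Rightarrow> real) \<Rightarrow> ('n,'m) pt \<Rightarrow> real^'n" where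
  "gradX Phi w = fst (gradPhi Phi w)"
definition gradY :: "(('n::finite,'m::finite) pt \<Rightarrow> real) \<Rightarrow> ('n,'m) pt \<Rightarrow> real^'m" where
  "gradY Phi w = fst (snd (gradPhi Phi w))"
definition gradZ :: "(('n::finite,'m::finite) pt \<Rightarrow> real) \<Rightarrow> ('n,'m) pt \<Rightarrow> real^'m" where
  "gradZ Phi w = snd (snd (gradPhi Phi w))"

definition r_pri :: "('n::finite,'m::finite) pt \<Rightarrow> real" where
  "r_pri w = (case w of (X,Y,Z) \<Rightarrow>
     max (infnorm (\<chi> i. min (Y$i) 0))
       (max (infnorm (\<chi> i. min (Z$i) 0)) (infnorm (\<chi> i. Y$i * Z$i))))"

definition r_in_uv :: "(('n::finite,'m::finite) pt \<Rightarrow> real) \<Rightarrow> ('n,'m) pt \<Rightarrow> real^'m \<Rightarrow> real^'m \<Rightarrow> real" where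
  "r_in_uv Phi w u v =
     max (infnorm (gradX Phi w))
       (max (infnorm (gradY Phi w - u)) (max (infnorm (gradZ Phi w - v)) (r_pri w)))"

definition r_in :: "(('n::finite,'m::finite) pt \<Rightarrow> real) \<Rightarrow> ('n,'m) pt \<Rightarrow> real" where
  "r_in Phi w = Inf ((\<lambda>(u,v). r_in_uv Phi w u v) ` MM w)"

definition Phi_inf :: "(('n::finite,'m::finite) pt \<Rightarrow> real) \<Rightarrow> real" where
  "Phi_inf Phi = Inf {Phi (X,Y,Z) | X Y Z. (Y,Z) \<in> compC}"

end

theory Submission imports Defs begin

lemma grad_ok:
  fixes f :: "'a::euclidean_space \<Rightarrow> real"
  assumes "f differentiable (at x)"
  shows "GDERIV f x :> (THE D. GDERIV f x :> D)"
proof -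
  obtain f' where f': "(f has_derivative f') (at x)" using assms differentiable_def by blast
  have lin: "linear f'" using f' has_derivative_linear by blast
  define D where "D = adjoint f' 1"
  have "f' = (\<lambda>h. inner h D)"
    by (rule ext) (simp add: D_def adjoint_works[OF lin])
  with f' have ex: "GDERIV f x :> D" by (simp add: gderiv_def)
  have uq: "D' = D" if "GDERIV f x :> D'" for D'
  proof -
    have "(\<lambda>h. inner h D') = (\<lambda>h. inner h D)"
      using has_derivative_unique that ex unfolding gderiv_def by blast
    then have "inner (D' - D) D' = inner (D' - D) D" by metis
    then have "inner (D' - D) (D' - D) = 0" by (simp add: inner_diff_right)
    then show ?thesis by simp
  qed
  show ?thesis using ex uq by (rule theI)
qed

lemma onesided:
  fixes f :: "'a::real_inner \<Rightarrow> real"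
  assumes g: "GDERIV f x :> D" and d: "d > 0"
    and mn: "\<And>t. 0 < t \<Longrightarrow> t < d \<Longrightarrow> f x \<le> f (x + t *\<^sub>R h)"
  shows "inner h D \<ge> 0"
proof -
  have l: "((\<lambda>t. x + t *\<^sub>R h) has_derivative (\<lambda>t. t *\<^sub>R h)) (at 0)"
    by (auto intro!: derivative_eq_intros)
  have "((\<lambda>t. f (x + t *\<^sub>R h)) has_derivative (\<lambda>t. inner (t *\<^sub>R h) D)) (at 0)"
  proof -
    have g': "(f has_derivative (\<lambda>h. inner h D)) (at ((\<lambda>t. x + t *\<^sub>R h) 0))"
      using g unfolding gderiv_def by simp
    show ?thesis using has_derivative_compose[OF l g'] by simp
  qed
  then have "((\<lambda>t. f (x + t *\<^sub>R h)) has_real_derivative inner h D) (at 0)"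
    unfolding has_field_derivative_def
    by (rule has_derivative_eq_rhs) (auto simp: fun_eq_iff mult.commute)
  then have "((\<lambda>t. (f (x + t *\<^sub>R h) - f x) / t) \<longlongrightarrow> inner h D) (at 0)"
    unfolding has_field_derivative_iff by simp
  then have lim: "((\<lambda>t. (f (x + t *\<^sub>R h) - f x) / t) \<longlongrightarrow> inner h D) (at_right 0)"
    by (rule filterlim_mono) (auto simp: at_le)
  have ev: "eventually (\<lambda>t. 0 \<le> (f (x + t *\<^sub>R h) - f x) / t) (at_right (0::real))"
    unfolding eventually_at_right_field using d mn
    by (intro exI[of _ d]) auto
  show ?thesis by (rule tendsto_lowerbound[OF lim ev]) simp
qed


lemma dirY:
  fixes Phi :: "(real^'n::finite) \<times> (real^'m::finite) \<times> (real^'m) \<Rightarrow> real"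
  assumes g: "GDERIV Phi (X,Y,Z) :> G"
    and mn: "\<forall>Y' Z'. (Y',Z') \<in> compC \<longrightarrow> Phi (X,Y,Z) \<le> Phi (X,Y',Z')"
    and C: "(Y,Z) \<in> compC" and z: "Z$i = 0" and d: "d > 0"
    and ok: "\<And>t. 0 < t \<Longrightarrow> t < d \<Longrightarrow> Y$i + s * t \<ge> 0"
  shows "s * (fst (snd G))$i \<ge> 0"
proof -
  have "inner (0, axis i s, 0) G \<ge> 0"
  proof (rule onesided[OF g d])
    fix t :: real assume t: "0 < t" "t < d"
    have "(Y + t *\<^sub>R axis i s, Z) \<in> compC"
      using C ok[OF t] z unfolding compC_def by (auto simp: axis_def mult.commute)
    then have "Phi (X,Y,Z) \<le> Phi (X, Y + t *\<^sub>R axis i s, Z)" using mn by blast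
    then show "Phi (X,Y,Z) \<le> Phi ((X,Y,Z) + t *\<^sub>R (0, axis i s, 0))" by simp
  qed
  then show ?thesis by (cases G) (simp add: inner_axis')
qed

lemma dirZ:
  fixes Phi :: "(real^'n::finite) \<times> (real^'m::finite) \<times> (real^'m) \<Rightarrow> real"
  assumes g: "GDERIV Phi (X,Y,Z) :> G"
    and mn: "\<forall>Y' Z'. (Y',Z') \<in> compC \<longrightarrow> Phi (X,Y,Z) \<le> Phi (X,Y',Z')"
    and C: "(Y,Z) \<in> compC" and z: "Y$i = 0" and d: "d > 0"
    and ok: "\<And>t. 0 < t \<Longrightarrow> t < d \<Longrightarrow> Z$i + s * t \<ge> 0"
  shows "s * (snd (snd G))$i \<ge> 0"
proof -
  have "inner (0, 0, axis i s) G \<ge> 0"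
  proof (rule onesided[OF g d])
    fix t :: real assume t: "0 < t" "t < d"
    have "(Y, Z + t *\<^sub>R axis i s) \<in> compC"
      using C ok[OF t] z unfolding compC_def by (auto simp: axis_def mult.commute)
    then have "Phi (X,Y,Z) \<le> Phi (X, Y, Z + t *\<^sub>R axis i s)" using mn by blast
    then show "Phi (X,Y,Z) \<le> Phi ((X,Y,Z) + t *\<^sub>R (0, 0, axis i s))" by simp
  qed
  then show ?thesis by (cases G) (simp add: inner_axis')
qed

lemma stationary:
  fixes Phi :: "(real^'n::finite) \<times> (real^'m::finite) \<times> (real^'m) \<Rightarrow> real"
  assumes dif: "Phi differentiable (at w)"
    and C: "snd w \<in> compC"
    and mn: "\<forall>Y Z. (Y,Z) \<in> compC \<longrightarrow> Phi w \<le> Phi (fst w, Y, Z)"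
  shows "(gradY Phi w, gradZ Phi w) \<in> MM w"
    and "r_in_uv Phi w (gradY Phi w) (gradZ Phi w) = infnorm (gradX Phi w)"
    and "r_in Phi w \<le> infnorm (gradX Phi w)"
proof -
  obtain X Y Z where w: "w = (X,Y,Z)" by (cases w) auto
  have g: "GDERIV Phi (X,Y,Z) :> gradPhi Phi w"
    using grad_ok[OF dif] unfolding gradPhi_def w .
  have C': "(Y,Z) \<in> compC" using C w by simp
  have mn': "\<forall>Y' Z'. (Y',Z') \<in> compC \<longrightarrow> Phi (X,Y,Z) \<le> Phi (X,Y',Z')" using mn w by simp
  have Cp: "Y$i \<ge> 0" "Z$i \<ge> 0" "Y$i * Z$i = 0" for i using C' unfolding compC_def by auto
  note dY = dirY[OF g mn' C']
  note dZ = dirZ[OF g mn' C']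
  show mm: "(gradY Phi w, gradZ Phi w) \<in> MM w"
    unfolding MM_def
  proof (clarsimp, intro conjI ballI)
    fix i assume "i \<in> Ipz w"
    then have i: "Y$i > 0" "Z$i = 0" by (auto simp: Ipz_def w)
    have "1 * (fst (snd (gradPhi Phi w)))$i \<ge> 0"
      by (rule dY[OF i(2), of 1]) (use i in auto)
    moreover have "(-1) * (fst (snd (gradPhi Phi w)))$i \<ge> 0"
      by (rule dY[OF i(2) i(1), of "-1"]) auto
    ultimately show "gradY Phi w $ i = 0" by (simp add: gradY_def)
  next
    fix i assume "i \<in> Izp w"
    then have i: "Z$i > 0" "Y$i = 0" by (auto simp: Izp_def w)
    have "1 * (snd (snd (gradPhi Phi w)))$i \<ge> 0"
      by (rule dZ[OF i(2), of 1]) (use i in auto)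
    moreover have "(-1) * (snd (snd (gradPhi Phi w)))$i \<ge> 0"
      by (rule dZ[OF i(2) i(1), of "-1"]) auto
    ultimately show "gradZ Phi w $ i = 0" by (simp add: gradZ_def)
  next
    fix i assume "i \<in> Izz w"
    then have i: "Z$i = 0" "Y$i = 0" by (auto simp: Izz_def w)
    have "1 * (fst (snd (gradPhi Phi w)))$i \<ge> 0"
      by (rule dY[OF i(1), of 1]) (use i in auto)
    moreover have "1 * (snd (snd (gradPhi Phi w)))$i \<ge> 0"
      by (rule dZ[OF i(2), of 1]) (use i in auto)
    ultimately show "(gradY Phi w $ i, gradZ Phi w $ i) \<in> QM"
      by (auto simp: gradY_def gradZ_def QM_def)
  qed
  have z1: "(\<chi> i. min (Y$i) 0) = (0::real^'m)" using Cp by (simp add: vec_eq_iff)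
  have z2: "(\<chi> i. min (Z$i) 0) = (0::real^'m)" using Cp by (simp add: vec_eq_iff)
  have z3: "(\<chi> i. Y$i * Z$i) = (0::real^'m)" using Cp by (simp add: vec_eq_iff)
  have rp: "r_pri w = 0" unfolding r_pri_def w using z1 z2 z3 by (simp add: infnorm_0)
  show eq: "r_in_uv Phi w (gradY Phi w) (gradZ Phi w) = infnorm (gradX Phi w)"
    unfolding r_in_uv_def rp by (simp add: infnorm_pos_le infnorm_0)
  have bdd: "bdd_below ((\<lambda>(u,v). r_in_uv Phi w u v) ` MM w)"
    by (rule bdd_belowI[of _ 0]) (auto simp: r_in_uv_def infnorm_pos_le intro: max.coboundedI1)
  show "r_in Phi w \<le> infnorm (gradX Phi w)"
    unfolding r_in_def using cInf_lower[OF imageI[OF mm] bdd] eq by simp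
qed

theorem theorem2:
  fixes Phi :: "(real^'n) \<times> (real^'m) \<times> (real^'m) \<Rightarrow> real"
    and w :: "nat \<Rightarrow> (real^'n) \<times> (real^'m) \<times> (real^'m)"
    and cX :: real
  assumes A1_smooth: "\<exists>U. open U \<and> range w \<subseteq> U \<and> (\<forall>x\<in>U. Phi differentiable (at x))
                         \<and> continuous_on U (gradPhi Phi) \<and> (\<exists>L. L-lipschitz_on U (gradPhi Phi))"
    and A1_bounded: "bounded (range w)"
    and A1_below: "bdd_below {Phi (X,Y,Z) | X Y Z. (Y,Z) \<in> compC}"
    and A2_pos: "cX > 0"
    and A2: "\<And>j. Phi (w (Suc j)) \<le> Phi (w j) - cX * (infnorm (gradX Phi (w j)))\<^sup>2"
    and A3: "\<And>j. snd (w j) \<in> compC \<and>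
               (\<forall>Y Z. (Y,Z) \<in> compC \<longrightarrow> Phi (w j) \<le> Phi (fst (w j), Y, Z))"
  shows "(\<forall>\<epsilon>>0. \<exists>j u v. (u,v) \<in> MM (w j) \<and> r_in_uv Phi (w j) u v \<le> \<epsilon>
                          \<and> r_in Phi (w j) \<le> \<epsilon>)
       \<and> (\<forall>N. Min ((\<lambda>j. r_in Phi (w j)) ` {..N})
               \<le> sqrt ((Phi (w 0) - Phi_inf Phi) / (cX * (real N + 1))))"
proof -
  obtain U where U: "range w \<subseteq> U" "\<forall>x\<in>U. Phi differentiable (at x)" using A1_smooth by blast
  define a where "a j = infnorm (gradX Phi (w j))" for j
  define K where "K = Phi (w 0) - Phi_inf Phi"
  have wd: "Phi differentiable (at (w j))" for j using U by blast
  have mn: "\<forall>Y Z. (Y,Z) \<in> compC \<longrightarrow> Phi (w j) \<le> Phi (fst (w j), Y, Z)" for j using A3 by blast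
  note st = stationary[OF wd conjunct1[OF A3] mn]
  have a0: "a j \<ge> 0" for j unfolding a_def by (rule infnorm_pos_le)
  have tele: "Phi (w (Suc N)) \<le> Phi (w 0) - cX * (\<Sum>j\<le>N. (a j)\<^sup>2)" for N
  proof (induction N)
    case 0 then show ?case using A2[of 0] by (simp add: a_def)
  next
    case (Suc N) then show ?case using A2[of "Suc N"] by (simp add: a_def algebra_simps)
  qed
  have infle: "Phi_inf Phi \<le> Phi (w j)" for j
  proof -
    obtain X Y Z where w: "w j = (X,Y,Z)" by (cases "w j") auto
    have "Phi (w j) \<in> {Phi (X,Y,Z) | X Y Z. (Y,Z) \<in> compC}" using A3[of j] w by auto
    then show ?thesis unfolding Phi_inf_def by (rule cInf_lower[OF _ A1_below])
  qed
  have sumK: "cX * (\<Sum>j\<le>N. (a j)\<^sup>2) \<le> K" for N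
    using tele[of N] infle[of "Suc N"] unfolding K_def by simp
  have K0: "K \<ge> 0" using sumK[of 0] A2_pos 
  proof -
    have "0 \<le> cX * (\<Sum>j\<le>0. (a j)\<^sup>2)" using A2_pos by (intro mult_nonneg_nonneg sum_nonneg) auto
    then show ?thesis using sumK[of 0] by linarith
  qed
  have key: "\<exists>j\<le>N. a j \<le> sqrt (K / (cX * (real N + 1)))" for N
  proof (rule ccontr)
    assume nt: "\<not> ?thesis"
    have lt: "sqrt (K / (cX * (real N + 1))) < a j" if "j \<le> N" for j using nt that not_le by blast
    define q where "q = K / (cX * (real N + 1))"
    have q0: "q \<ge> 0" unfolding q_def using K0 A2_pos by simp
    have "q < (a j)\<^sup>2" if "j \<le> N" for j
    proof -
      have "sqrt q < a j" using lt[OF that] q_def by simp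
      then have "(sqrt q)\<^sup>2 < (a j)\<^sup>2" using q0 by (intro power_strict_mono) auto
      then show ?thesis using q0 by simp
    qed
    then have "(\<Sum>j\<le>N. q) < (\<Sum>j\<le>N. (a j)\<^sup>2)" by (intro sum_strict_mono) auto
    then have "(real N + 1) * q < (\<Sum>j\<le>N. (a j)\<^sup>2)" by (simp add: add.commute)
    then have "cX * ((real N + 1) * q) < cX * (\<Sum>j\<le>N. (a j)\<^sup>2)" using A2_pos by simp
    moreover have "cX * ((real N + 1) * q) = K" 
    proof -
      have "cX * (real N + 1) \<noteq> 0" using A2_pos by simp
      then show ?thesis unfolding q_def by (simp add: mult.assoc[symmetric] mult.commute[of cX])
    qed
    ultimately show False using sumK[of N] by simp
  qed
  show ?thesis
  proof (intro conjI allI impI)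
    fix e :: real assume e: "e > 0"
    obtain N :: nat where N: "K / (cX * e\<^sup>2) \<le> real N" using real_arch_simple by blast
    have "K \<le> (cX * e\<^sup>2) * real N" using N A2_pos e by (simp add: divide_le_eq mult.commute)
    also have "\<dots> \<le> (cX * e\<^sup>2) * (real N + 1)" using A2_pos e by simp
    finally have kk: "K \<le> e\<^sup>2 * (cX * (real N + 1))" by (simp add: algebra_simps)
    have "cX * (real N + 1) > 0" using A2_pos by simp
    then have "K / (cX * (real N + 1)) \<le> e\<^sup>2" using kk by (simp add: pos_divide_le_eq)
    then have "sqrt (K / (cX * (real N + 1))) \<le> e"
      using e by (metis real_sqrt_abs abs_of_pos real_sqrt_le_mono)
    moreover obtain j where "j \<le> N" "a j \<le> sqrt (K / (cX * (real N + 1)))" using key[of N] by blast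
    ultimately have j: "a j \<le> e" by linarith
    have "(gradY Phi (w j), gradZ Phi (w j)) \<in> MM (w j) \<and> r_in_uv Phi (w j) (gradY Phi (w j)) (gradZ Phi (w j)) \<le> e \<and> r_in Phi (w j) \<le> e"
      using st[of j] j unfolding a_def by simp
    then show "\<exists>j u v. (u,v) \<in> MM (w j) \<and> r_in_uv Phi (w j) u v \<le> e \<and> r_in Phi (w j) \<le> e"
      by blast
  next
    fix N
    obtain j where j: "j \<le> N" "a j \<le> sqrt (K / (cX * (real N + 1)))" using key by blast
    have "Min ((\<lambda>j. r_in Phi (w j)) ` {..N}) \<le> r_in Phi (w j)" using j by (intro Min_le) auto
    also have "\<dots> \<le> a j" using st(3)[of j] unfolding a_def .
    finally show "Min ((\<lambda>j. r_in Phi (w j)) ` {..N}) \<le> sqrt ((Phi (w 0) - Phi_inf Phi) / (cX * (real N + 1)))"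
      using j unfolding K_def by simp
  qed
qed

end
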